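(* Let $n\ge 3$ and $v\in A_n$. Then $$\mathrm{cyc}(v)=\begin{cases} n-\ell_{T(A_n)}(v) & \text{if } \ell_{T(A_n)}(v) \text{ is even},\\ n-\ell_{T(A_n)}(v)-1 & \text{if } \ell_{T(A_n)}(v)\text{ is odd}.\end{cases}$$
   Context: $A_n$ is the alternating group on $\{1,\dots,n\}$, $T(A_n)=\{(1\,2)(i\,j)\mid 1\le i<j\le n\}$, and $\ell_{T(A_n)}(v)=\min\{k\ge 0\mid v=t_1\cdots t_k,\ t_i\in T(A_n)\}$. $\mathrm{cyc}(v)$ is the number of cycles of $v$ in its disjoint cycle decomposition, fixed points counted. *)

theory Defs
  imports "HOL-Combinatorics.Combinatorics"
begin

definition alt_group :: "nat \<Rightarrow> (nat \<Rightarrow> nat) set" where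
  "alt_group n = {p. p permutes {1..n} \<and> evenperm p}"

definition T_alt :: "nat \<Rightarrow> (nat \<Rightarrow> nat) set" where
  "T_alt n = {transpose 1 2 \<circ> transpose i j | i j. 1 \<le> i \<and> i < j \<and> j \<le> n}"

definition list_prod :: "(nat \<Rightarrow> nat) list \<Rightarrow> nat \<Rightarrow> nat" where
  "list_prod ts = foldr (\<circ>) ts id"

definition len_T :: "nat \<Rightarrow> (nat \<Rightarrow> nat) \<Rightarrow> nat" where
  "len_T n v = (LEAST k. \<exists>ts. length ts = k \<and> set ts \<subseteq> T_alt n \<and> v = list_prod ts)"

definition cyc :: "nat \<Rightarrow> (nat \<Rightarrow> nat) \<Rightarrow> nat" where
  "cyc n v = card ((\<lambda>x. orbit v x) ` {1..n})"

end

theory Submission imports Defs begin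

definition cycS :: "'a set \<Rightarrow> ('a \<Rightarrow> 'a) \<Rightarrow> nat" where
  "cycS S f = card ((\<lambda>x. orbit f x) ` S)"

lemma orbit_eq':
  assumes "permutation f" "y \<in> orbit f x" shows "orbit f y = orbit f x"
  using assms by (metis cyclic_on_orbit' orbit_cyclic_eq3)

lemma L1:
  assumes f: "f permutes S" and fin: "finite S" and a: "a \<in> S" and b: "b \<in> S"
  shows "cycS S f \<le> cycS S (f \<circ> transpose a b) + 1"
proof -
  define g where "g = f \<circ> transpose a b"
  have g: "g permutes S" unfolding g_def using f a b by (simp add: permutes_compose permutes_swap_id)
  have pf: "permutation f" and pg: "permutation g" using f g fin permutation_permutes by blast+
  define Of where "Of = (\<lambda>x. orbit f x) ` S"
  define Og where "Og = (\<lambda>x. orbit g x) ` S"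
  define A where "A = {X \<in> Of. a \<notin> X \<and> b \<notin> X}"
  have finA: "finite A" unfolding A_def Of_def using fin by simp
  have "Of \<subseteq> A \<union> {orbit f a, orbit f b}"
  proof
    fix X assume "X \<in> Of"
    then obtain x where X: "X = orbit f x" by (auto simp: Of_def)
    show "X \<in> A \<union> {orbit f a, orbit f b}"
      using orbit_eq'[OF pf, of a x] orbit_eq'[OF pf, of b x] \<open>X \<in> Of\<close> X by (auto simp: A_def)
  qed
  hence "card Of \<le> card (A \<union> {orbit f a, orbit f b})" using finA by (intro card_mono) auto
  also have "\<dots> \<le> card A + card {orbit f a, orbit f b}" by (rule card_Un_le)
  also have "\<dots> \<le> card A + 2" by (simp add: card_insert_le_m1)
  finally have c1: "card Of \<le> card A + 2" .
  have "insert (orbit g a) A \<subseteq> Og"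
  proof
    fix X assume "X \<in> insert (orbit g a) A"
    then show "X \<in> Og"
    proof
      assume "X = orbit g a" thus ?thesis using a by (auto simp: Og_def)
    next
      assume XA: "X \<in> A"
      then obtain x where x: "x \<in> S" "X = orbit f x" and nab: "a \<notin> X" "b \<notin> X"
        by (auto simp: A_def Of_def)
      have "orbit g x = orbit f x"
        by (rule orbit_cong) (use permutation_self_in_orbit[OF pf] x nab in \<open>auto simp: g_def transpose_def\<close>)
      thus ?thesis using x by (auto simp: Og_def)
    qed
  qed
  moreover have "orbit g a \<notin> A" using permutation_self_in_orbit[OF pg, of a] by (auto simp: A_def)
  ultimately have "card A + 1 \<le> card Og" using finA fin
    by (metis Og_def card_insert_disjoint card_mono finite_imageI Suc_eq_plus1)
  with c1 show ?thesis unfolding cycS_def Of_def[symmetric] Og_def[symmetric] g_def[symmetric] by simp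
qed


lemma L2:
  assumes v: "v permutes S" and fin: "finite S" and a: "a \<in> S" and va: "v a \<noteq> a"
  shows "cycS S v + 1 \<le> cycS S (v \<circ> transpose a (v a))"
proof -
  define b where "b = v a"
  define p where "p = v \<circ> transpose a b"
  have b: "b \<in> S" unfolding b_def using v a by (simp add: permutes_in_image)
  have ab: "a \<noteq> b" using va b_def by simp
  have p: "p permutes S" unfolding p_def using v a b by (simp add: permutes_compose permutes_swap_id)
  have pv: "permutation v" and pp: "permutation p" using v p fin permutation_permutes by blast+
  define Ov where "Ov = (\<lambda>x. orbit v x) ` S"
  define Op where "Op = (\<lambda>x. orbit p x) ` S"
  define A where "A = {X \<in> Ov. a \<notin> X}"
  have finA: "finite A" unfolding A_def Ov_def using fin by simp
  have bva: "b \<in> orbit v a" unfolding b_def by (rule orbit.base)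
  have nb: "b \<notin> X" if "X \<in> A" for X
  proof
    assume bX: "b \<in> X"
    from that obtain x where X: "X = orbit v x" "a \<notin> X" by (auto simp: A_def Ov_def)
    have "orbit v b = X" using orbit_eq'[OF pv bX[unfolded X(1)]] X by simp
    moreover have "orbit v b = orbit v a" using orbit_eq'[OF pv bva] .
    ultimately show False using X permutation_self_in_orbit[OF pv, of a] by simp
  qed
  have "Ov \<subseteq> insert (orbit v a) A"
  proof
    fix X assume "X \<in> Ov"
    then obtain x where X: "X = orbit v x" by (auto simp: Ov_def)
    show "X \<in> insert (orbit v a) A"
      using orbit_eq'[OF pv, of a x] \<open>X \<in> Ov\<close> X by (auto simp: A_def)
  qed
  hence "card Ov \<le> card (insert (orbit v a) A)" using finA by (intro card_mono) auto
  also have "\<dots> \<le> card A + 1" by (simp add: card_insert_le_m1 card_insert_if)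
  finally have c1: "card Ov \<le> card A + 1" .
  have pb: "p b = b" unfolding p_def b_def by simp
  have ob: "orbit p b = {b}" using pb orbit_eq_singleton_iff by metis
  have "insert {b} (insert (orbit p a) A) \<subseteq> Op"
  proof
    fix X assume "X \<in> insert {b} (insert (orbit p a) A)"
    then consider "X = {b}" | "X = orbit p a" | "X \<in> A" by blast
    then show "X \<in> Op"
    proof cases
      case 1 thus ?thesis using b ob by (auto simp: Op_def intro!: image_eqI[of _ _ b])
    next
      case 2 thus ?thesis using a by (auto simp: Op_def)
    next
      case 3
      then obtain x where x: "x \<in> S" "X = orbit v x" and nab: "a \<notin> X" "b \<notin> X"
        using nb by (auto simp: A_def Ov_def)
      have "orbit p x = orbit v x"
        by (rule orbit_cong) (use permutation_self_in_orbit[OF pv] x nab in \<open>auto simp: p_def transpose_def\<close>)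
      thus ?thesis using x by (auto simp: Op_def)
    qed
  qed
  moreover have "orbit p a \<notin> A" using permutation_self_in_orbit[OF pp, of a] by (auto simp: A_def)
  moreover have "{b} \<notin> insert (orbit p a) A" using nb ab permutation_self_in_orbit[OF pp, of a] by auto
  ultimately have "card A + 2 \<le> card Op" using finA fin
    by (metis Op_def card_insert_disjoint card_mono finite_imageI finite_insert add_2_eq_Suc')
  with c1 show ?thesis unfolding cycS_def Ov_def[symmetric] Op_def[symmetric] p_def[symmetric] b_def[symmetric] by simp
qed

lemma cycS_inv:
  assumes "permutation f" shows "cycS S (inv f) = cycS S f"
  unfolding cycS_def using orbit_inv_eq[OF assms] by simp

lemma L1L:
  assumes f: "f permutes S" and fin: "finite S" and a: "a \<in> S" and b: "b \<in> S"
  shows "cycS S f \<le> cycS S (transpose a b \<circ> f) + 1"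
proof -
  have pf: "permutation f" using f fin permutation_permutes by blast
  have bf: "bij f" using f permutes_bij by blast
  have "inv (transpose a b \<circ> f) = inv f \<circ> transpose a b"
    using bf by (simp add: o_inv_distrib)
  moreover have "permutation (transpose a b \<circ> f)"
    using pf by (simp add: permutation_compose permutation_swap_id)
  ultimately have "cycS S (transpose a b \<circ> f) = cycS S (inv f \<circ> transpose a b)"
    by (metis cycS_inv)
  moreover have "cycS S (inv f) \<le> cycS S (inv f \<circ> transpose a b) + 1"
    using L1[OF permutes_inv[OF f] fin a b] .
  ultimately show ?thesis using cycS_inv[OF pf] by simp
qed

lemma cycS_id: "finite S \<Longrightarrow> cycS S id = card S"
  unfolding cycS_def
  by (subst card_image) (auto simp: inj_on_def orbit_eq_singleton_iff[THEN iffD2])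

lemma cycS_le: "finite S \<Longrightarrow> cycS S f \<le> card S"
  unfolding cycS_def by (rule card_image_le)


definition Tr :: "nat \<Rightarrow> (nat \<Rightarrow> nat) set" where
  "Tr n = {transpose i j | i j. 1 \<le> i \<and> i < j \<and> j \<le> n}"

lemma tr_mem: "a \<in> {1..n} \<Longrightarrow> b \<in> {1..n} \<Longrightarrow> a \<noteq> b \<Longrightarrow> transpose a b \<in> Tr n"
  unfolding Tr_def
  apply (cases "a < b")
   apply force
  apply (rule CollectI, rule exI[of _ b], rule exI[of _ a]) by (auto simp: transpose_commute)

lemma list_prod_Cons[simp]: "list_prod (t # ts) = t \<circ> list_prod ts"
  by (simp add: list_prod_def)
lemma list_prod_Nil[simp]: "list_prod [] = id"
  by (simp add: list_prod_def)
lemma list_prod_append: "list_prod (xs @ ys) = list_prod xs \<circ> list_prod ys"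
  by (induction xs) auto

lemma Tr_list: "set L \<subseteq> Tr n \<Longrightarrow> list_prod L permutes {1..n} \<and> evenperm (list_prod L) = even (length L)"
proof (induction L)
  case Nil show ?case by (simp only: list_prod_Nil list.size(3) evenperm_id permutes_id even_zero simp_thms)
next
  case (Cons t L)
  then obtain i j where t: "t = transpose i j" "1 \<le> i" "i < j" "j \<le> n" by (auto simp: Tr_def)
  have P: "list_prod L permutes {1..n}" "evenperm (list_prod L) = even (length L)" using Cons by auto
  have tp: "t permutes {1..n}" using t by (simp add: permutes_swap_id)
  have pL: "permutation (list_prod L)" using P(1) permutation_permutes by blast
  have c1: "t \<circ> list_prod L permutes {1..n}" by (rule permutes_compose[OF P(1) tp])
  have c2: "evenperm (t \<circ> list_prod L) = (evenperm t = evenperm (list_prod L))"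
    unfolding t(1) by (rule evenperm_comp[OF permutation_swap_id pL])
  have c3: "evenperm t = False" using t by (simp add: evenperm_swap)
  have c4: "(False = even (length L)) = even (length (t # L))" by simp
  show ?case unfolding list_prod_Cons using c1 c2 c3 c4 P(2) by metis
qed

lemma conj12: "transpose (1::nat) 2 \<circ> transpose i j \<circ> transpose 1 2 = transpose (transpose 1 2 i) (transpose 1 2 j)"
  by (auto simp: fun_eq_iff transpose_def)

lemma Talt_perm:
  assumes "n \<ge> 2" "t \<in> T_alt n" shows "t permutes {1..n}"
  using assms by (auto simp: T_alt_def intro!: permutes_compose permutes_swap_id)

lemma Talt_list_perm: "n \<ge> 2 \<Longrightarrow> set ts \<subseteq> T_alt n \<Longrightarrow> list_prod ts permutes {1..n}"
proof (induction ts)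
  case Nil show ?case unfolding list_prod_Nil by (rule permutes_id)
next
  case (Cons t ts)
  hence "t permutes {1..n}" "list_prod ts permutes {1..n}" using Talt_perm by auto
  thus ?case unfolding list_prod_Cons by (metis permutes_compose)
qed

lemma LB:
  assumes "n \<ge> 2" shows "set ts \<subseteq> T_alt n \<Longrightarrow> n \<le> cycS {1..n} (list_prod ts) + length ts + length ts mod 2"
proof (induction ts rule: induct_list012)
  case 1 then show ?case by (simp only: list_prod_Nil cycS_id finite_atLeastAtMost) simp
next
  case (2 x)
  then obtain i j where x: "x = transpose 1 2 \<circ> transpose i j" "1 \<le> i" "i < j" "j \<le> n" by (auto simp: T_alt_def)
  have "cycS {1..n} id \<le> cycS {1..n} (transpose i j \<circ> id) + 1"
    using x by (intro L1L) (auto simp: permutes_id)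
  moreover have "cycS {1..n} (transpose i j \<circ> id) \<le> cycS {1..n} (transpose 1 2 \<circ> (transpose i j \<circ> id)) + 1"
    using x assms by (intro L1L) (auto simp: permutes_swap_id)
  moreover have eqx: "list_prod [x] = transpose 1 2 \<circ> (transpose i j \<circ> id)"
    by (simp only: list_prod_Cons list_prod_Nil x(1) o_assoc)
  moreover have "cycS {1..n} id = n" using cycS_id[of "{1..n::nat}"] by simp
  moreover have len1: "length [x] = 1" by simp
  moreover have m: "(1::nat) mod 2 = 1" by simp
  ultimately show ?case unfolding eqx len1 m by linarith
next
  case (3 x y zs)
  then obtain i j where x: "x = transpose 1 2 \<circ> transpose i j" "1 \<le> i" "i < j" "j \<le> n" by (auto simp: T_alt_def)
  from 3 obtain k l where y: "y = transpose 1 2 \<circ> transpose k l" "1 \<le> k" "k < l" "l \<le> n" by (auto simp: T_alt_def)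
  define P where "P = list_prod zs"
  have P: "P permutes {1..n}" unfolding P_def using 3 assms Talt_list_perm by auto
  have IH: "n \<le> cycS {1..n} P + length zs + length zs mod 2" using 3 P_def by auto
  have xy: "x \<circ> y = transpose (transpose 1 2 i) (transpose 1 2 j) \<circ> transpose k l"
    unfolding conj12[symmetric] x(1) y(1) by (simp only: o_assoc)
  have i': "transpose 1 2 i \<in> {1..n}" "transpose 1 2 j \<in> {1..n}" using x assms by (auto simp: transpose_def)
  have "cycS {1..n} P \<le> cycS {1..n} (transpose k l \<circ> P) + 1"
    using y P by (intro L1L) auto
  moreover have "cycS {1..n} (transpose k l \<circ> P) \<le> cycS {1..n} (transpose (transpose 1 2 i) (transpose 1 2 j) \<circ> (transpose k l \<circ> P)) + 1"
  proof -
    have kp: "transpose k l \<circ> P permutes {1..n}"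
      by (rule permutes_compose[OF P permutes_swap_id]) (use y in auto)
    show ?thesis by (rule L1L[OF kp _ i'(1) i'(2)]) simp
  qed
  moreover have "list_prod (x # y # zs) = transpose (transpose 1 2 i) (transpose 1 2 j) \<circ> (transpose k l \<circ> P)"
    using xy P_def by (simp add: comp_assoc[symmetric])
  moreover have "length (x # y # zs) = length zs + 2" by simp
  ultimately show ?case using IH by presburger
qed

lemma UB:
  assumes "v permutes {1..n}"
  shows "\<exists>L. set L \<subseteq> Tr n \<and> length L = n - cycS {1..n} v \<and> v = list_prod L"
  using assms
proof (induction "n - cycS {1..n} v" arbitrary: v rule: less_induct)
  case less
  show ?case
  proof (cases "v = id")
    case True then show ?thesis
    proof (intro exI[of _ "[]"] conjI)
      show "v = list_prod []" by (simp only: True list_prod_Nil)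
      show "length [] = n - cycS {1..n} v" using cycS_id[of "{1..n::nat}"] True by simp
    qed simp
  next
    case False
    then obtain a where va: "v a \<noteq> a" by (auto simp: fun_eq_iff)
    hence a: "a \<in> {1..n}" using less.prems by (meson permutes_not_in)
    define b where "b = v a"
    have b: "b \<in> {1..n}" unfolding b_def using permutes_in_image[OF less.prems] a by blast
    define p where "p = v \<circ> transpose a b"
    have p: "p permutes {1..n}" unfolding p_def using less.prems a b by (simp add: permutes_compose permutes_swap_id)
    have c1: "cycS {1..n} v + 1 \<le> cycS {1..n} p" unfolding p_def b_def using L2[OF less.prems _ a va] by simp
    have vp: "v = p \<circ> transpose a b" unfolding p_def by (simp add: comp_assoc)
    have c2: "cycS {1..n} p \<le> cycS {1..n} v + 1" using L1[OF p _ a b] vp by simp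
    have c3: "cycS {1..n} p \<le> n" using cycS_le[of "{1..n}" p] by simp
    obtain L where L: "set L \<subseteq> Tr n" "length L = n - cycS {1..n} p" "p = list_prod L"
      using less.hyps[OF _ p] c1 c3 by force
    have "transpose a b \<in> Tr n" using a b va b_def by (intro tr_mem) auto
    then show ?thesis using L c1 c2 c3 vp
      by (intro exI[of _ "L @ [transpose a b]"]) (auto simp: list_prod_append)
  qed
qed

lemma pairing:
  assumes "n \<ge> 2"
  shows "set L \<subseteq> Tr n \<Longrightarrow> even (length L) \<Longrightarrow> \<exists>L'. length L' = length L \<and> set L' \<subseteq> T_alt n \<and> list_prod L' = list_prod L"
proof (induction L rule: induct_list012)
  case 1 then show ?case by (intro exI[of _ "[]"]) simp
next
  case (2 x) then show ?case by simp
next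
  case (3 x y zs)
  then obtain L' where L': "length L' = length zs" "set L' \<subseteq> T_alt n" "list_prod L' = list_prod zs" by auto
  from 3 obtain i j where x: "x = transpose i j" "1 \<le> i" "i < j" "j \<le> n" by (auto simp: Tr_def)
  from 3 obtain k l where y: "y = transpose k l" "1 \<le> k" "k < l" "l \<le> n" by (auto simp: Tr_def)
  define x' where "x' = transpose (transpose 1 2 i) (transpose 1 2 j)"
  have "x' \<in> Tr n" unfolding x'_def using x assms by (intro tr_mem) (auto simp: transpose_def)
  then obtain i' j' where x': "x' = transpose i' j'" "1 \<le> i'" "i' < j'" "j' \<le> n" by (auto simp: Tr_def)
  have "transpose 1 2 \<circ> x' = x \<circ> transpose 1 2"
    unfolding x'_def x by (auto simp: fun_eq_iff transpose_def)
  hence e: "(transpose 1 2 \<circ> x') \<circ> (transpose 1 2 \<circ> y) = x \<circ> y"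
    by (metis comp_assoc comp_id transpose_comp_involutory)
  have m1: "transpose 1 2 \<circ> x' \<in> T_alt n" using x' by (auto simp: T_alt_def)
  have m2: "transpose 1 2 \<circ> y \<in> T_alt n" using y by (auto simp: T_alt_def)
  have "list_prod ((transpose 1 2 \<circ> x') # (transpose 1 2 \<circ> y) # L') = ((transpose 1 2 \<circ> x') \<circ> (transpose 1 2 \<circ> y)) \<circ> list_prod L'"
    by (simp only: list_prod_Cons o_assoc)
  also have "\<dots> = (x \<circ> y) \<circ> list_prod zs" by (simp only: e L'(3))
  also have "\<dots> = list_prod (x # y # zs)" by (simp only: list_prod_Cons o_assoc)
  finally have eq: "list_prod ((transpose 1 2 \<circ> x') # (transpose 1 2 \<circ> y) # L') = list_prod (x # y # zs)" .
  show ?case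
    by (rule exI[of _ "(transpose 1 2 \<circ> x') # (transpose 1 2 \<circ> y) # L'"])
       (use L' m1 m2 eq in auto)
qed


lemma arith_final:
  fixes c l n :: nat
  assumes "l \<le> n - c" "n \<le> c + l + l mod 2" "even (n - c)" "c \<le> n"
  shows "c = (if even l then n - l else n - l - 1)"
proof -
  obtain r where r: "n - c = 2 * r" using assms(3) by (metis evenE)
  show ?thesis
  proof (cases "even l")
    case True then obtain k where "l = 2 * k" by auto
    thus ?thesis using assms r True by auto
  next
    case False then obtain k where "l = 2 * k + 1" using oddE by blast
    thus ?thesis using assms r False by (simp; presburger)
  qed
qed

theorem theorem6p3:
  fixes n :: nat and v :: "nat \<Rightarrow> nat"
  assumes "n \<ge> 3" and "v \<in> alt_group n"
  shows "cyc n v = (if even (len_T n v) then n - len_T n v else n - len_T n v - 1)"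
proof -
  have n2: "n \<ge> 2" using assms(1) by simp
  have vp: "v permutes {1..n}" and ve: "evenperm v" using assms(2) by (auto simp: alt_group_def)
  have cv: "cyc n v = cycS {1..n} v" by (simp add: cyc_def cycS_def)
  have cle: "cycS {1..n} v \<le> n" using cycS_le[of "{1..n::nat}" v] by simp
  obtain L where L: "set L \<subseteq> Tr n" "length L = n - cycS {1..n} v" "v = list_prod L"
    using UB[OF vp] by blast
  have ev: "even (n - cycS {1..n} v)" using Tr_list[OF L(1)] L ve by simp
  obtain L' where L': "length L' = length L" "set L' \<subseteq> T_alt n" "list_prod L' = list_prod L"
    using pairing[OF n2 L(1)] ev L(2) by auto
  have ex: "\<exists>ts. length ts = length L \<and> set ts \<subseteq> T_alt n \<and> v = list_prod ts"
    using L' L(3) by metis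
  have l1: "len_T n v \<le> n - cycS {1..n} v"
  proof -
    have "len_T n v \<le> length L"
      unfolding len_T_def by (rule Least_le) (use ex in blast)
    thus ?thesis using L(2) by simp
  qed
  have "\<exists>ts. length ts = len_T n v \<and> set ts \<subseteq> T_alt n \<and> v = list_prod ts"
    unfolding len_T_def by (rule LeastI_ex) (use ex in blast)
  then obtain ts where ts: "length ts = len_T n v" "set ts \<subseteq> T_alt n" "v = list_prod ts" by blast
  have l2: "n \<le> cycS {1..n} v + len_T n v + len_T n v mod 2"
    using LB[OF n2 ts(2)] ts by simp
  show ?thesis unfolding cv using arith_final[OF l1 l2 ev cle] .
qed

end
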